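(* Let $(X,*,0)$ be a solid weak BCC-algebra. Then for all $x,y\in X$ belonging to the same branch, $x*(x*(x*y))=x*y$.
   Context: A weak BCC-algebra is a set $X$ with a binary operation $*$ and a constant $0$ satisfying, for all $x,y,z\in X$: (i) $((x*y)*(z*y))*(x*z)=0$; (ii) $x*x=0$; (iii) $x*0=x$; (iv) $x*y=y*x=0$ implies $x=y$. The relation $x\leqslant y$ iff $x*y=0$ is a partial order on $X$. Let $I(X)$ be the set of minimal elements of $X$ with respect to $\leqslant$. For $a\in I(X)$ the branch initiated by $a$ is $B(a)=\{x\in X: a\leqslant x\}$; "belonging to the same branch" means lying in a common $B(a)$. A weak BCC-algebra is called (left) solid if $(x*y)*z=(x*z)*y$ holds for all $x,y$ belonging to the same branch and all $z\in X$. *)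

theory Defs
  imports Main
begin

definition weak_bcc :: "'a set \<Rightarrow> ('a \<Rightarrow> 'a \<Rightarrow> 'a) \<Rightarrow> 'a \<Rightarrow> bool" where
  "weak_bcc X m z \<longleftrightarrow>
     z \<in> X \<and> (\<forall>x\<in>X. \<forall>y\<in>X. m x y \<in> X) \<and>
     (\<forall>x\<in>X. \<forall>y\<in>X. \<forall>w\<in>X. m (m (m x y) (m w y)) (m x w) = z) \<and>
     (\<forall>x\<in>X. m x x = z) \<and>
     (\<forall>x\<in>X. m x z = x) \<and>
     (\<forall>x\<in>X. \<forall>y\<in>X. m x y = z \<and> m y x = z \<longrightarrow> x = y)"

definition bcc_le :: "('a \<Rightarrow> 'a \<Rightarrow> 'a) \<Rightarrow> 'a \<Rightarrow> 'a \<Rightarrow> 'a \<Rightarrow> bool" where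
  "bcc_le m z x y \<longleftrightarrow> m x y = z"

definition minimal_elems :: "'a set \<Rightarrow> ('a \<Rightarrow> 'a \<Rightarrow> 'a) \<Rightarrow> 'a \<Rightarrow> 'a set" where
  "minimal_elems X m z = {a \<in> X. \<forall>y\<in>X. bcc_le m z y a \<longrightarrow> y = a}"

definition branch :: "'a set \<Rightarrow> ('a \<Rightarrow> 'a \<Rightarrow> 'a) \<Rightarrow> 'a \<Rightarrow> 'a \<Rightarrow> 'a set" where
  "branch X m z a = {x \<in> X. bcc_le m z a x}"

definition same_branch :: "'a set \<Rightarrow> ('a \<Rightarrow> 'a \<Rightarrow> 'a) \<Rightarrow> 'a \<Rightarrow> 'a \<Rightarrow> 'a \<Rightarrow> bool" where
  "same_branch X m z x y \<longleftrightarrow>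
     (\<exists>a\<in>minimal_elems X m z. x \<in> branch X m z a \<and> y \<in> branch X m z a)"

definition solid_weak_bcc :: "'a set \<Rightarrow> ('a \<Rightarrow> 'a \<Rightarrow> 'a) \<Rightarrow> 'a \<Rightarrow> bool" where
  "solid_weak_bcc X m z \<longleftrightarrow> weak_bcc X m z \<and>
     (\<forall>x\<in>X. \<forall>y\<in>X. \<forall>w\<in>X. same_branch X m z x y \<longrightarrow> m (m x y) w = m (m x w) y)"

end

theory Submission
  imports Defs
begin

theorem lemma3p5:
  fixes X :: "'a set" and m :: "'a \<Rightarrow> 'a \<Rightarrow> 'a" and z :: 'a
  assumes "solid_weak_bcc X m z"
    and "x \<in> X" and "y \<in> X"
    and "same_branch X m z x y"
  shows "m x (m x (m x y)) = m x y"
proof -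
  have W: "weak_bcc X m z" and S: "\<And>x y w. x\<in>X \<Longrightarrow> y\<in>X \<Longrightarrow> w\<in>X \<Longrightarrow> same_branch X m z x y \<Longrightarrow> m (m x y) w = m (m x w) y"
    using assms(1) unfolding solid_weak_bcc_def by (blast, blast)
  have z: "z \<in> X" and cl: "\<And>x y. x\<in>X \<Longrightarrow> y\<in>X \<Longrightarrow> m x y \<in> X"
    and ax1: "\<And>x y w. x\<in>X \<Longrightarrow> y\<in>X \<Longrightarrow> w\<in>X \<Longrightarrow> m (m (m x y) (m w y)) (m x w) = z"
    and ax2: "\<And>x. x\<in>X \<Longrightarrow> m x x = z"
    and ax3: "\<And>x. x\<in>X \<Longrightarrow> m x z = x"
    and ax4: "\<And>x y. x\<in>X \<Longrightarrow> y\<in>X \<Longrightarrow> m x y = z \<Longrightarrow> m y x = z \<Longrightarrow> x = y"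
    using W unfolding weak_bcc_def by (blast, blast, blast, blast, blast, blast)
  have rmono: "\<And>p q c. p\<in>X \<Longrightarrow> q\<in>X \<Longrightarrow> c\<in>X \<Longrightarrow> m p q = z \<Longrightarrow> m (m p c) (m q c) = z"
  proof -
    fix p q c assume h: "p\<in>X" "q\<in>X" "c\<in>X" "m p q = z"
    have "m (m (m p c) (m q c)) (m p q) = z" using ax1 h by blast
    thus "m (m p c) (m q c) = z" using h ax3 cl by simp
  qed
  have lanti: "\<And>p q c. p\<in>X \<Longrightarrow> q\<in>X \<Longrightarrow> c\<in>X \<Longrightarrow> m q p = z \<Longrightarrow> m (m c p) (m c q) = z"
  proof -
    fix p q c assume h: "p\<in>X" "q\<in>X" "c\<in>X" "m q p = z"
    have "m (m (m c p) (m q p)) (m c q) = z" using ax1 h by blast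
    thus "m (m c p) (m c q) = z" using h ax3 cl by simp
  qed
  obtain a where a: "a \<in> minimal_elems X m z" "x \<in> branch X m z a" "y \<in> branch X m z a"
    using assms(4) unfolding same_branch_def by blast
  have aX: "a \<in> X" and amin: "\<And>w. w\<in>X \<Longrightarrow> m w a = z \<Longrightarrow> w = a"
    using a(1) unfolding minimal_elems_def bcc_le_def by auto
  have ax: "m a x = z" and ay: "m a y = z" using a(2,3) unfolding branch_def bcc_le_def by auto
  have xy: "m x y \<in> X" using cl[OF assms(2,3)] .
  have "m (m a y) (m x y) = z" using rmono[OF aX assms(2) assms(3) ax] .
  hence zxy: "m z (m x y) = z" using ay by simp
  have "m (m a (m x y)) (m a z) = z" using lanti[OF xy z aX zxy] .
  hence "m (m a (m x y)) a = z" using ax3 aX by simp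
  hence aa: "m a (m x y) = a" using amin[OF cl[OF aX xy]] by simp
  define u where "u = m x (m x y)"
  have uX: "u \<in> X" using u_def cl[OF assms(2) xy] by simp
  have "m (m a (m x y)) u = z" using rmono[OF aX assms(2) xy ax] u_def by simp
  hence au: "m a u = z" using aa by simp
  have sb: "same_branch X m z x u"
    unfolding same_branch_def branch_def bcc_le_def using a(1) au ax assms(2) uX by blast
  have "m (m x u) (m x y) = m (m x (m x y)) u" using S[OF assms(2) uX xy sb] .
  hence le1: "m (m x u) (m x y) = z" using u_def ax2 uX by simp
  have "m (m x (m x y)) y = m (m x y) (m x y)" using S[OF assms(2,3) xy assms(4)] by simp
  hence uy: "m u y = z" using u_def ax2 xy by simp
  have le2: "m (m x y) (m x u) = z" using lanti[OF assms(3) uX assms(2) uy] .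
  show ?thesis using ax4[OF cl[OF assms(2) uX] xy le1 le2] u_def by simp
qed

end
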